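(* Let $n\ge1$, $0\le m$, and let $T\in\mathbb R[x,u_0,\dots,u_n]$ satisfy $T(\mathcal P_n)\subset\mathcal P_m$. Decompose $T=\sum_{\ell,k}T_{\ell,k}$ where $T_{\ell,k}$ is the sum of those monomial terms $C\,x^ju_{i_1}\cdots u_{i_\ell}$ of $T$ that have degree $\ell$ in the $u$-variables and weight $j+n\ell-(i_1+\cdots+i_\ell)=k$. Then each $T_{\ell,k}$ also satisfies $T_{\ell,k}(\mathcal P_n)\subset\mathcal P_m$.
   Context: Elements $P\in\mathbb R[x,u_0,\dots,u_n]$ act on smooth $f$ by $P[f](x)=P(x,f(x),f'(x),\dots,f^{(n)}(x))$. $\mathcal P_s$ is the space of real polynomials in $x$ of degree at most $s$. The weight is defined on monomials by $\operatorname{wt}(x)=1$, $\operatorname{wt}(u_i)=n-i$, extended multiplicatively-additively. *)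

theory Defs
  imports Complex_Main "HOL-Computational_Algebra.Polynomial"
begin

text \<open>A differential operator T in R[x,u_0,...,u_n] is represented by its coefficient
  function: a monomial x^j u_0^(a 0) ... u_n^(a n) is the pair (j, a), and T (j,a) is its
  real coefficient.\<close>

type_synonym dop = "nat \<times> (nat \<Rightarrow> nat) \<Rightarrow> real"

definition is_dop :: "nat \<Rightarrow> dop \<Rightarrow> bool" where
  "is_dop n T \<longleftrightarrow> finite {mo. T mo \<noteq> 0} \<and>
     (\<forall>j a. T (j, a) \<noteq> 0 \<longrightarrow> (\<forall>i>n. a i = 0))"

text \<open>Action on a polynomial f: T[f](x) = T(x, f(x), f'(x), ..., f^(n)(x)).\<close>
definition dop_eval :: "nat \<Rightarrow> dop \<Rightarrow> real poly \<Rightarrow> real \<Rightarrow> real" where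
  "dop_eval n T f x = (\<Sum>mo\<in>{mo. T mo \<noteq> 0}.
      T mo * x ^ fst mo * (\<Prod>i\<le>n. poly ((pderiv ^^ i) f) x ^ snd mo i))"

definition udeg :: "nat \<Rightarrow> (nat \<Rightarrow> nat) \<Rightarrow> nat" where
  "udeg n a = (\<Sum>i\<le>n. a i)"

definition wt :: "nat \<Rightarrow> nat \<times> (nat \<Rightarrow> nat) \<Rightarrow> nat" where
  "wt n mo = fst mo + (\<Sum>i\<le>n. (n - i) * snd mo i)"

definition component :: "nat \<Rightarrow> dop \<Rightarrow> nat \<Rightarrow> nat \<Rightarrow> dop" where
  "component n T l k = (\<lambda>mo. if udeg n (snd mo) = l \<and> wt n mo = k then T mo else 0)"

definition maps_into :: "nat \<Rightarrow> nat \<Rightarrow> dop \<Rightarrow> bool" where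
  "maps_into n m T \<longleftrightarrow> (\<forall>f::real poly. degree f \<le> n \<longrightarrow>
      (\<exists>q::real poly. degree q \<le> m \<and> (\<forall>x. dop_eval n T f x = poly q x)))"

end

theory Submission
  imports Defs
begin

lemma vanish2:
  fixes c :: "nat \<Rightarrow> nat \<Rightarrow> real"
  assumes h: "\<And>lam nu. nu \<noteq> 0 \<Longrightarrow> (\<Sum>l\<le>L. \<Sum>k\<le>K. lam ^ l * nu ^ k * c l k) = 0"
  shows "\<And>l k. l \<le> L \<Longrightarrow> k \<le> K \<Longrightarrow> c l k = 0"
proof -
  have A: "(\<Sum>k\<le>K. c l k * nu ^ k) = 0" if "nu \<noteq> 0" "l \<le> L" for nu l
  proof -
    have "\<forall>lam. (\<Sum>l\<le>L. (\<Sum>k\<le>K. c l k * nu ^ k) * lam ^ l) = 0"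
    proof
      fix lam
      have "(\<Sum>l\<le>L. (\<Sum>k\<le>K. c l k * nu ^ k) * lam ^ l) = (\<Sum>l\<le>L. \<Sum>k\<le>K. lam ^ l * nu ^ k * c l k)"
        unfolding sum_distrib_right by (intro sum.cong refl) (simp only: mult.commute mult.left_commute)
      then show "(\<Sum>l\<le>L. (\<Sum>k\<le>K. c l k * nu ^ k) * lam ^ l) = 0" using h[OF that(1)] by simp
    qed
    then have "\<forall>i\<le>L. (\<Sum>k\<le>K. c i k * nu ^ k) = 0"
      by (rule polyfun_eq_0[THEN iffD1])
    then show ?thesis using that(2) by blast
  qed
  fix l k assume l: "l \<le> L" and k: "k \<le> K"
  have "{nu::real. nu \<noteq> 0} \<subseteq> {nu. (\<Sum>k\<le>K. c l k * nu ^ k) = 0}" using A l by blast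
  moreover have "infinite {nu::real. nu \<noteq> 0}"
  proof
    assume "finite {nu::real. nu \<noteq> 0}"
    then have "finite (insert 0 {nu::real. nu \<noteq> 0})" by simp
    moreover have "insert 0 {nu::real. nu \<noteq> 0} = UNIV" by blast
    ultimately show False by (simp add: infinite_UNIV_char_0)
  qed
  ultimately have "infinite {nu. (\<Sum>k\<le>K. c l k * nu ^ k) = 0}" using finite_subset by blast
  then have "\<not> (\<exists>i\<le>K. c l i \<noteq> 0)" using polyfun_finite_roots[of "c l" K] by blast
  then show "c l k = 0" using k by blast
qed


lemma deriv_scale:
  "(pderiv ^^ i) (smult c (pcompose f [:0, b:])) = smult (c * b ^ i) (pcompose ((pderiv ^^ i) f) [:0, b:])"
proof (induction i)
  case 0
  then show ?case by simp
next
  case (Suc i)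
  have d: "pderiv [:0, b:] = [:b:]" by (simp add: pderiv_pCons)
  have "(pderiv ^^ Suc i) (smult c (pcompose f [:0, b:])) = pderiv ((pderiv ^^ i) (smult c (pcompose f [:0, b:])))"
    by simp
  also have "\<dots> = smult (c * b ^ i) (pcompose (pderiv ((pderiv ^^ i) f)) [:0, b:] * [:b:])"
    by (simp add: Suc pderiv_smult pderiv_pcompose d)
  also have "\<dots> = smult (c * b ^ Suc i) (pcompose ((pderiv ^^ Suc i) f) [:0, b:])"
    by (simp add: mult.commute mult.left_commute)
  finally show ?case .
qed

lemma poly_deriv_scale:
  fixes f :: "real poly"
  assumes "nu \<noteq> 0" "i \<le> n"
  shows "poly ((pderiv ^^ i) (smult (lam * nu ^ n) (pcompose f [:0, 1/nu:]))) (nu * y)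
     = lam * nu ^ (n - i) * poly ((pderiv ^^ i) f) y"
proof -
  have "nu ^ n * (1 / nu) ^ i = nu ^ (n - i)"
    using assms by (simp add: power_diff power_one_over)
  then show ?thesis using assms
    by (simp add: deriv_scale poly_pcompose mult.assoc)
qed

lemma dop_eval_superset:
  assumes "finite A" "{mo. T mo \<noteq> 0} \<subseteq> A"
  shows "dop_eval n T f x = (\<Sum>mo\<in>A. T mo * x ^ fst mo * (\<Prod>i\<le>n. poly ((pderiv ^^ i) f) x ^ snd mo i))"
  unfolding dop_eval_def
  by (rule sum.mono_neutral_left) (use assms in auto)

definition dpoly :: "nat \<Rightarrow> dop \<Rightarrow> real poly \<Rightarrow> real poly" where
  "dpoly n T f = (\<Sum>mo\<in>{mo. T mo \<noteq> 0}.
      smult (T mo) ([:0, 1:] ^ fst mo * (\<Prod>i\<le>n. ((pderiv ^^ i) f) ^ snd mo i)))"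

lemma poly_dpoly: "poly (dpoly n T f) x = dop_eval n T f x"
  unfolding dpoly_def dop_eval_def
  by (simp add: poly_sum poly_prod mult.assoc)


lemma sum_single:
  assumes "finite A" "a \<in> A" "\<And>x. x \<in> A \<Longrightarrow> x \<noteq> a \<Longrightarrow> g x = 0"
  shows "sum g A = g a"
  using assms by (simp add: sum.remove)

definition Mo :: "nat \<Rightarrow> real poly \<Rightarrow> nat \<times> (nat \<Rightarrow> nat) \<Rightarrow> real \<Rightarrow> real" where
  "Mo n f mo y = y ^ fst mo * (\<Prod>i\<le>n. poly ((pderiv ^^ i) f) y ^ snd mo i)"

lemma mono_scale:
  fixes f :: "real poly"
  assumes "nu \<noteq> 0"
  shows "(nu * y) ^ fst mo * (\<Prod>i\<le>n. poly ((pderiv ^^ i) (smult (lam * nu ^ n) (pcompose f [:0, 1/nu:]))) (nu * y) ^ snd mo i)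
    = lam ^ udeg n (snd mo) * nu ^ wt n mo * Mo n f mo y"
proof -
  have "(\<Prod>i\<le>n. poly ((pderiv ^^ i) (smult (lam * nu ^ n) (pcompose f [:0, 1/nu:]))) (nu * y) ^ snd mo i)
      = (\<Prod>i\<le>n. (lam * nu ^ (n - i) * poly ((pderiv ^^ i) f) y) ^ snd mo i)"
    by (rule prod.cong) (use assms poly_deriv_scale in auto)
  also have "\<dots> = (\<Prod>i\<le>n. lam ^ snd mo i) * (\<Prod>i\<le>n. nu ^ ((n - i) * snd mo i)) * (\<Prod>i\<le>n. poly ((pderiv ^^ i) f) y ^ snd mo i)"
    by (simp add: power_mult_distrib prod.distrib power_mult)
  also have "\<dots> = lam ^ udeg n (snd mo) * nu ^ (\<Sum>i\<le>n. (n - i) * snd mo i) * (\<Prod>i\<le>n. poly ((pderiv ^^ i) f) y ^ snd mo i)"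
    by (simp add: udeg_def power_sum)
  finally show ?thesis
    unfolding Mo_def wt_def power_add power_mult_distrib by (simp only: mult_ac)
qed

lemma eval_scale:
  fixes f :: "real poly"
  assumes "nu \<noteq> 0" "finite {mo. T mo \<noteq> 0}"
  shows "dop_eval n T (smult (lam * nu ^ n) (pcompose f [:0, 1/nu:])) (nu * y)
    = (\<Sum>mo\<in>{mo. T mo \<noteq> 0}. T mo * (lam ^ udeg n (snd mo) * nu ^ wt n mo * Mo n f mo y))"
  unfolding dop_eval_def
  by (rule sum.cong) (use assms mono_scale in \<open>auto simp: mult.assoc\<close>)

lemma comp_sum:
  fixes f :: "real poly"
  assumes fin: "finite {mo. T mo \<noteq> 0}"
    and bd: "\<And>mo. T mo \<noteq> 0 \<Longrightarrow> udeg n (snd mo) \<le> L \<and> wt n mo \<le> K"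
  shows "(\<Sum>l\<le>L. \<Sum>k\<le>K. lam ^ l * nu ^ k * dop_eval n (component n T l k) f y)
    = (\<Sum>mo\<in>{mo. T mo \<noteq> 0}. T mo * (lam ^ udeg n (snd mo) * nu ^ wt n mo * Mo n f mo y))"
proof -
  let ?S = "{mo. T mo \<noteq> 0}"
  have e: "dop_eval n (component n T l k) f y = (\<Sum>mo\<in>?S. component n T l k mo * Mo n f mo y)" for l k
    by (subst dop_eval_superset[OF fin]) (auto simp: component_def Mo_def mult.assoc)
  have "(\<Sum>l\<le>L. \<Sum>k\<le>K. lam ^ l * nu ^ k * dop_eval n (component n T l k) f y)
     = (\<Sum>l\<le>L. \<Sum>k\<le>K. \<Sum>mo\<in>?S. lam ^ l * nu ^ k * (component n T l k mo * Mo n f mo y))"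
    by (simp add: e sum_distrib_left)
  also have "\<dots> = (\<Sum>mo\<in>?S. \<Sum>l\<le>L. \<Sum>k\<le>K. lam ^ l * nu ^ k * (component n T l k mo * Mo n f mo y))"
    by (subst sum.swap) (rule sum.cong[OF refl], rule sum.swap)
  also have "\<dots> = (\<Sum>mo\<in>?S. T mo * (lam ^ udeg n (snd mo) * nu ^ wt n mo * Mo n f mo y))"
  proof (rule sum.cong[OF refl])
    fix mo assume "mo \<in> ?S"
    then have b: "udeg n (snd mo) \<le> L" "wt n mo \<le> K" using bd by auto
    have "(\<Sum>l\<le>L. \<Sum>k\<le>K. lam ^ l * nu ^ k * (component n T l k mo * Mo n f mo y))
      = (\<Sum>k\<le>K. lam ^ udeg n (snd mo) * nu ^ k * (component n T (udeg n (snd mo)) k mo * Mo n f mo y))"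
      by (rule sum_single) (use b in \<open>auto simp: component_def\<close>)
    also have "\<dots> = lam ^ udeg n (snd mo) * nu ^ wt n mo * (component n T (udeg n (snd mo)) (wt n mo) mo * Mo n f mo y)"
      by (rule sum_single) (use b in \<open>auto simp: component_def\<close>)
    also have "\<dots> = lam ^ udeg n (snd mo) * nu ^ wt n mo * (T mo * Mo n f mo y)"
      by (simp add: component_def)
    finally show "(\<Sum>l\<le>L. \<Sum>k\<le>K. lam ^ l * nu ^ k * (component n T l k mo * Mo n f mo y))
      = T mo * (lam ^ udeg n (snd mo) * nu ^ wt n mo * Mo n f mo y)" by (simp add: mult_ac)
  qed
  finally show ?thesis .
qed


theorem mainTheorem7:
  fixes n m :: nat and T :: dop
  assumes "n \<ge> 1"
    and "is_dop n T"
    and "maps_into n m T"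
  shows "\<forall>l k. maps_into n m (component n T l k)"
proof (intro allI)
  fix l0 k0
  let ?S = "{mo. T mo \<noteq> 0}"
  have fin: "finite ?S" using assms(2) by (simp add: is_dop_def)
  define L where "L = (\<Sum>mo\<in>?S. udeg n (snd mo))"
  define K where "K = (\<Sum>mo\<in>?S. wt n mo)"
  have bd: "udeg n (snd mo) \<le> L \<and> wt n mo \<le> K" if "T mo \<noteq> 0" for mo
    unfolding L_def K_def using fin that by (auto intro: member_le_sum)
  have finc: "finite {mo. component n T l k mo \<noteq> 0}" for l k
    by (rule finite_subset[OF _ fin]) (auto simp: component_def)
  show "maps_into n m (component n T l0 k0)"
    unfolding maps_into_def
  proof (intro allI impI)
    fix f :: "real poly" assume degf: "degree f \<le> n"
    define P where "P l k = dpoly n (component n T l k) f" for l k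
    have polyP: "poly (P l k) y = dop_eval n (component n T l k) f y" for l k y
      by (simp add: P_def poly_dpoly)
    have key: "(\<Sum>l\<le>L. \<Sum>k\<le>K. lam ^ l * nu ^ k * coeff (P l k) d) = 0"
      if nu: "nu \<noteq> 0" and d: "d > m" for lam nu d
    proof -
      define g where "g = smult (lam * nu ^ n) (pcompose f [:0, 1/nu:])"
      have "degree g \<le> degree (pcompose f [:0, 1/nu:])" unfolding g_def by (rule degree_smult_le)
      also have "\<dots> = degree f" using nu by (simp add: degree_pcompose)
      finally have "degree g \<le> n" using degf by simp
      then obtain q :: "real poly" where q: "degree q \<le> m" "\<And>x. dop_eval n T g x = poly q x"
        using assms(3) unfolding maps_into_def by blast
      define R where "R = (\<Sum>l\<le>L. \<Sum>k\<le>K. smult (lam ^ l * nu ^ k) (P l k))"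
      have "poly R y = poly (pcompose q [:0, nu:]) y" for y
      proof -
        have "poly R y = (\<Sum>l\<le>L. \<Sum>k\<le>K. lam ^ l * nu ^ k * dop_eval n (component n T l k) f y)"
          by (simp add: R_def poly_sum polyP)
        also have "\<dots> = (\<Sum>mo\<in>?S. T mo * (lam ^ udeg n (snd mo) * nu ^ wt n mo * Mo n f mo y))"
          by (rule comp_sum[OF fin bd])
        also have "\<dots> = dop_eval n T g (nu * y)"
          unfolding g_def by (rule eval_scale[OF nu fin, symmetric])
        also have "\<dots> = poly (pcompose q [:0, nu:]) y"
          by (simp add: q(2) poly_pcompose mult.commute)
        finally show ?thesis .
      qed
      then have "R = pcompose q [:0, nu:]" by (intro poly_ext) simp
      moreover have "degree (pcompose q [:0, nu:]) \<le> m"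
        using q(1) nu by (simp add: degree_pcompose)
      ultimately have "coeff R d = 0" using d by (simp add: coeff_eq_0)
      then show ?thesis by (simp add: R_def coeff_sum)
    qed
    have "degree (P l0 k0) \<le> m"
    proof (cases "l0 \<le> L \<and> k0 \<le> K")
      case True
      show ?thesis
      proof (rule degree_le, intro allI impI)
        fix d assume "m < d"
        show "coeff (P l0 k0) d = 0"
          using vanish2[where L=L and K=K and c="\<lambda>l k. coeff (P l k) d"] key[OF _ \<open>m < d\<close>] True by blast
      qed
    next
      case False
      have "{mo. component n T l0 k0 mo \<noteq> 0} = {}"
      proof (rule ccontr)
        assume "{mo. component n T l0 k0 mo \<noteq> 0} \<noteq> {}"
        then obtain mo where "component n T l0 k0 mo \<noteq> 0" by blast
        then have "T mo \<noteq> 0" "udeg n (snd mo) = l0" "wt n mo = k0"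
          by (auto simp: component_def split: if_splits)
        then show False using bd[of mo] False by simp
      qed
      then have "P l0 k0 = 0" unfolding P_def dpoly_def by (simp only: sum.empty)
      then show ?thesis by simp
    qed
    then show "\<exists>q. degree q \<le> m \<and> (\<forall>x. dop_eval n (component n T l0 k0) f x = poly q x)"
      using polyP by metis
  qed
qed

end
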